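(* Let $\triangle_{\delta,\varepsilon}$ be a sparse coloured triangle and let $\gamma$ be an integer. Suppose two distinct black dots $(\alpha,\gamma')$ and $(\beta,\delta')$ of $\triangle_{\delta,\varepsilon}$ both lie on or above the line $l_\gamma$, i.e. $\alpha\le\gamma\le\gamma'$ and $\beta\le\gamma\le\delta'$. Then either both dots lie on $l_\gamma$ (i.e. each has $\gamma$ as one of its coordinates), or they are comparable in the partial order $\preceq$.
   Context: Dots are pairs of integers $(\alpha,\beta)$. For integers $\delta<\varepsilon$, the triangle $\triangle_{\delta,\varepsilon}$ is the set of dots $(\alpha,\beta)$ with $\delta\le\alpha$, $\beta\le\varepsilon$ and $\beta-\alpha\ge 2$; its vertex is $(\delta,\varepsilon)$ and its height is $\varepsilon-\delta-1$. For a dot $(\alpha,\beta)\in\triangle_{\delta,\varepsilon}$, the sub-triangle $\triangle_{\alpha,\beta}$ is defined by the same rule (it is contained in $\triangle_{\delta,\varepsilon}$). A coloured triangle is a triangle in which each dot is coloured black or white. A coloured triangle $\triangle_{\delta,\varepsilon}$ is sparse if for every dot $(\alpha,\beta)\in\triangle_{\delta,\varepsilon}$ (including the vertex) the number of black dots in $\triangle_{\alpha,\beta}$ is at most $\beta-\alpha-1$, with equality if and only if $(\alpha,\beta)$ is black. The line $l_\gamma$ is the set of dots having $\gamma$ as one of their coordinates; a dot $(\alpha,\beta)$ lies on or above $l_\gamma$ if $\alpha\le\gamma\le\beta$. The partial order is $(\alpha,\gamma)\preceq(\beta,\delta)$ iff $\alpha\ge\beta$ and $\gamma\le\delta$. 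*)

theory Defs
  imports Main
begin

type_synonym dot = "int \<times> int"

definition triangle :: "int \<Rightarrow> int \<Rightarrow> dot set" where
  "triangle d e = {(a, b). d \<le> a \<and> b \<le> e \<and> b - a \<ge> 2}"

definition black_count :: "(dot \<Rightarrow> bool) \<Rightarrow> int \<Rightarrow> int \<Rightarrow> nat" where
  "black_count col a b = card {p \<in> triangle a b. col p}"

definition sparse :: "(dot \<Rightarrow> bool) \<Rightarrow> int \<Rightarrow> int \<Rightarrow> bool" where
  "sparse col d e \<longleftrightarrow>
     (\<forall>(a, b) \<in> triangle d e.
        int (black_count col a b) \<le> b - a - 1 \<and>
        (int (black_count col a b) = b - a - 1 \<longleftrightarrow> col (a, b)))"

definition on_line :: "int \<Rightarrow> dot \<Rightarrow> bool" where
  "on_line g p \<longleftrightarrow> fst p = g \<or> snd p = g"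

definition on_or_above :: "int \<Rightarrow> dot \<Rightarrow> bool" where
  "on_or_above g p \<longleftrightarrow> fst p \<le> g \<and> g \<le> snd p"

definition dot_le :: "dot \<Rightarrow> dot \<Rightarrow> bool" where
  "dot_le p q \<longleftrightarrow> fst p \<ge> fst q \<and> snd p \<le> snd q"

end

theory Submission
  imports Defs
begin

lemma tri_fin: "finite (triangle a b)"
proof -
  have "triangle a b \<subseteq> {a..b} \<times> {a..b}" unfolding triangle_def by auto
  thus ?thesis by (rule finite_subset) auto
qed

lemma key:
  assumes sp: "sparse col d e"
    and p: "(a1,b1) \<in> triangle d e" and q: "(a2,b2) \<in> triangle d e"
    and c1: "col (a1,b1)" and c2: "col (a2,b2)"
    and o: "a1 < a2" "a2 < b1" "b1 < b2"
  shows False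
proof -
  define T1 where "T1 = {x \<in> triangle a1 b1. col x}"
  define T2 where "T2 = {x \<in> triangle a2 b2. col x}"
  define T where "T = {x \<in> triangle a1 b2. col x}"
  define I where "I = {x \<in> triangle a2 b1. col x}"
  have fT1: "finite T1" and fT2: "finite T2" and fT: "finite T" and fI: "finite I"
    using tri_fin unfolding T1_def T2_def T_def I_def by auto
  have int: "T1 \<inter> T2 = I" unfolding T1_def T2_def I_def triangle_def using o by auto
  have sub: "T1 \<union> T2 \<subseteq> T" unfolding T1_def T2_def T_def triangle_def using o by auto
  have nin: "(a1,b2) \<notin> T1 \<union> T2" unfolding T1_def T2_def triangle_def using o by auto
  have e1: "int (card T1) = b1 - a1 - 1"
    using sp p c1 unfolding sparse_def black_count_def T1_def by fastforce
  have e2: "int (card T2) = b2 - a2 - 1"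
    using sp q c2 unfolding sparse_def black_count_def T2_def by fastforce
  have pT: "(a1,b2) \<in> triangle d e" using p q o unfolding triangle_def by auto
  have bT: "int (card T) \<le> b2 - a1 - 1 \<and> (int (card T) = b2 - a1 - 1 \<longleftrightarrow> col (a1,b2))"
    using sp pT unfolding sparse_def black_count_def T_def by fastforce
  have bI: "int (card I) \<le> b1 - a2 - 1"
  proof (cases "b1 - a2 \<ge> 2")
    case True
    hence "(a2,b1) \<in> triangle d e" using p q o unfolding triangle_def by auto
    thus ?thesis using sp unfolding sparse_def black_count_def I_def by fastforce
  next
    case False
    hence "I = {}" unfolding I_def triangle_def by auto
    thus ?thesis using o False by simp
  qed
  have cu: "card (T1 \<union> T2) + card I = card T1 + card T2"
    using card_Un_Int[OF fT1 fT2] int by simp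
  show False
  proof (cases "col (a1,b2)")
    case True
    have "insert (a1,b2) (T1 \<union> T2) \<subseteq> T" using sub True unfolding T_def triangle_def using o pT
      by (auto simp: triangle_def)
    hence "card (insert (a1,b2) (T1 \<union> T2)) \<le> card T" using fT card_mono by blast
    hence "card (T1 \<union> T2) + 1 \<le> card T" using nin fT1 fT2 by simp
    thus False using cu e1 e2 bT bI by linarith
  next
    case False
    have "card (T1 \<union> T2) \<le> card T" using sub fT card_mono by blast
    thus False using cu e1 e2 bT bI False by linarith
  qed
qed

theorem mainTheorem1:
  fixes col :: "dot \<Rightarrow> bool" and d e g :: int and p q :: dot
  assumes "d < e"
    and "sparse col d e"
    and "p \<in> triangle d e" and "q \<in> triangle d e"
    and "col p" and "col q" and "p \<noteq> q"
    and "on_or_above g p" and "on_or_above g q"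
  shows "(on_line g p \<and> on_line g q) \<or> dot_le p q \<or> dot_le q p"
proof -
  obtain a1 b1 a2 b2 where pq: "p = (a1,b1)" "q = (a2,b2)" by fastforce
  have g: "a1 \<le> g" "g \<le> b1" "a2 \<le> g" "g \<le> b2" using assms(8,9) pq unfolding on_or_above_def by auto
  show ?thesis
  proof (rule ccontr)
    assume n: "\<not> ?thesis"
    hence "(a1 < a2 \<and> b1 < b2) \<or> (a2 < a1 \<and> b2 < b1)" using pq unfolding dot_le_def by auto
    thus False
    proof
      assume h: "a1 < a2 \<and> b1 < b2"
      show False
      proof (cases "a2 < b1")
        case True thus False using key[OF assms(2) assms(3,4)[unfolded pq] assms(5,6)[unfolded pq]] h by auto
      next
        case False hence "a2 = g" "b1 = g" using g by auto
        thus False using n pq unfolding on_line_def by auto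
      qed
    next
      assume h: "a2 < a1 \<and> b2 < b1"
      show False
      proof (cases "a1 < b2")
        case True thus False using key[OF assms(2) assms(4,3)[unfolded pq] assms(6,5)[unfolded pq]] h by auto
      next
        case False hence "a1 = g" "b2 = g" using g by auto
        thus False using n pq unfolding on_line_def by auto
      qed
    qed
  qed
qed

end
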